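(* Let $T\in\mathbb{N}$, $\Delta t>0$, $r\in\mathbb{R}$, $\mu\in\mathbb{R}$, $\sigma>0$, $S_0>0$, $B>0$, $K\in\mathbb{R}$, and $q(x)=(x-K)^+$. Let $S_{j+1}=S_j\exp((\mu-\frac{\sigma^2}{2})\Delta t+\sigma\sqrt{\Delta t}Z_j)$, $j=0,\dots,T-1$, with $Z_j$ i.i.d. standard normal, and let the knock-down-out barrier call payoff be $$V(S_1,\dots,S_T)=\begin{cases}q(S_T)&\text{if }\min_{j=1,\dots,T}S_j\ge B,\\0&\text{otherwise,}\end{cases}$$ with present value $PV_{t_0}(S_0)=e^{-rT\Delta t}\mathbb{E}(V(S_1,\dots,S_T))$. For $u=(u^{(1)},\dots,u^{(T)})\in[0,1]^T$ define recursively $S_0(u)=S_0$ and, for $t=0,\dots,T-1$, $$p_t=\Phi\left(\frac{\log(B/S_t(u))-(\mu-\frac{\sigma^2}{2})\Delta t}{\sigma\sqrt{\Delta t}}\right),\qquad S_{t+1}(u)=S_t(u)\exp\Big(\big(\mu-\tfrac{\sigma^2}{2}\big)\Delta t+\sigma\sqrt{\Delta t}\,\Phi^{-1}\big((1-p_t)u^{(t+1)}+p_t\big)\Big).$$ Then $$PV_{t_0}(S_0)=e^{-rT\Delta t}\int_0^1\cdots\int_0^1(1-p_0)\cdots(1-p_{T-1})\,q(S_T(u))\,\mathrm{d}u^{(T)}\cdots\mathrm{d}u^{(1)}.$$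
   Context: $\Phi$ is the standard normal cumulative distribution function and $\Phi^{-1}$ its inverse. Observation dates are equidistant with spacing $\Delta t$, so $t_T-t_0=T\Delta t$; $\mu=r-b$ with $b$ the dividend yield. *)

theory Defs
  imports "HOL-Probability.Probability"
begin

definition Phi :: "real \<Rightarrow> real" where
  "Phi x = measure (density lborel std_normal_density) {..x}"

text \<open>Inverse of Phi on (0,1); values at 0 and 1 (formally minus/plus infinity)
  are replaced by the arbitrary value 0, which only affects a null set.\<close>
definition Phi_inv :: "real \<Rightarrow> real" where
  "Phi_inv y = (if 0 < y \<and> y < 1 then (THE x. Phi x = y) else 0)"

fun gbm_path :: "real \<Rightarrow> real \<Rightarrow> real \<Rightarrow> real \<Rightarrow> (nat \<Rightarrow> real) \<Rightarrow> nat \<Rightarrow> real" where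
  "gbm_path mu sg dt s0 z 0 = s0"
| "gbm_path mu sg dt s0 z (Suc j) =
     gbm_path mu sg dt s0 z j * exp ((mu - sg\<^sup>2 / 2) * dt + sg * sqrt dt * z j)"

definition call_payoff :: "real \<Rightarrow> real \<Rightarrow> real" where
  "call_payoff K x = max (x - K) 0"

definition barrier_payoff :: "nat \<Rightarrow> real \<Rightarrow> real \<Rightarrow> (nat \<Rightarrow> real) \<Rightarrow> real" where
  "barrier_payoff T B K S = (if (\<forall>j\<in>{1..T}. S j \<ge> B) then call_payoff K (S T) else 0)"

definition ko_prob :: "real \<Rightarrow> real \<Rightarrow> real \<Rightarrow> real \<Rightarrow> real \<Rightarrow> real" where
  "ko_prob mu sg dt B s = Phi ((ln (B / s) - (mu - sg\<^sup>2 / 2) * dt) / (sg * sqrt dt))"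

text \<open>Conditional path S_t(u); u t plays the role of u^(t+1).\<close>
fun cond_path :: "real \<Rightarrow> real \<Rightarrow> real \<Rightarrow> real \<Rightarrow> real \<Rightarrow> (nat \<Rightarrow> real) \<Rightarrow> nat \<Rightarrow> real" where
  "cond_path mu sg dt B s0 u 0 = s0"
| "cond_path mu sg dt B s0 u (Suc t) =
     (let s = cond_path mu sg dt B s0 u t; p = ko_prob mu sg dt B s in
      s * exp ((mu - sg\<^sup>2 / 2) * dt + sg * sqrt dt * Phi_inv ((1 - p) * u t + p)))"

end

theory Submission
  imports Defs
begin

abbreviation Nrm :: "real measure" where "Nrm \<equiv> density lborel std_normal_density"

lemma Nrm_rd: "real_distribution Nrm"
  unfolding real_distribution_def real_distribution_axioms_def
  using prob_space_normal_density by simp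

interpretation NR: real_distribution Nrm by (rule Nrm_rd)

lemma Phi_cdf: "Phi = cdf Nrm"
  by (auto simp: Phi_def cdf_def fun_eq_iff)

lemma Phi_strict: assumes "x < y" shows "Phi x < Phi y"
proof -
  define R where "R = max \<bar>x\<bar> \<bar>y\<bar>"
  define m where "m = (1 / sqrt (2 * pi)) * exp (- R\<^sup>2 / 2)"
  have m: "m > 0" unfolding m_def by simp
  have le: "m \<le> std_normal_density t" if "t \<in> {x<..y}" for t
  proof -
    have "\<bar>t\<bar> \<le> R" using that unfolding R_def by auto
    then have "t\<^sup>2 \<le> R\<^sup>2" by (metis abs_ge_zero power2_abs power_mono)
    then show ?thesis unfolding m_def std_normal_density_def by (intro mult_left_mono) auto
  qed
  have "ennreal m * (y - x) = (\<integral>\<^sup>+ t. ennreal m * indicator {x<..y} t \<partial>lborel)"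
    using assms by (simp add: nn_integral_cmult_indicator)
  also have "\<dots> \<le> (\<integral>\<^sup>+ t. ennreal (std_normal_density t) * indicator {x<..y} t \<partial>lborel)"
    by (intro nn_integral_mono) (auto simp: indicator_def le)
  also have "\<dots> = emeasure Nrm {x<..y}"
    by (simp add: emeasure_density)
  finally have "ennreal (m * (y - x)) \<le> emeasure Nrm {x<..y}"
    using m assms by (simp add: ennreal_mult)
  then have "m * (y - x) \<le> measure Nrm {x<..y}"
    by (simp add: NR.emeasure_eq_measure)
  moreover have "m * (y - x) > 0" using m assms by simp
  ultimately have "measure Nrm {x<..y} > 0" by linarith
  then show ?thesis using NR.cdf_diff_eq[OF assms] unfolding Phi_cdf by linarith
qed

lemma Phi_mono: "x \<le> y \<Longrightarrow> Phi x \<le> Phi y"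
  using Phi_strict by (cases "x = y") (auto intro: less_imp_le)

lemma Phi_inj: "Phi x = Phi y \<Longrightarrow> x = y"
  by (metis Phi_strict linorder_neq_iff order_less_irrefl)

lemma Phi_less_iff: "Phi x < Phi y \<longleftrightarrow> x < y"
  by (meson Phi_mono Phi_strict not_less)

lemma Phi_le_iff: "Phi x \<le> Phi y \<longleftrightarrow> x \<le> y"
  by (meson Phi_mono Phi_strict not_less)

lemma Phi_cont: "isCont Phi x"
proof -
  have "(\<integral>\<^sup>+ t. ennreal (std_normal_density t) * indicator {x} t \<partial>lborel) = (\<integral>\<^sup>+ t. 0 \<partial>(lborel::real measure))"
  proof (rule nn_integral_cong_AE)
    show "AE t in lborel. ennreal (std_normal_density t) * indicator {x} t = 0"
      using AE_lborel_singleton[of x] by eventually_elim simp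
  qed
  then have "emeasure Nrm {x} = 0" by (simp add: emeasure_density)
  then have "measure Nrm {x} = 0" by (simp add: measure_def)
  then show ?thesis unfolding Phi_cdf by (simp add: NR.isCont_cdf)
qed

lemma Phi_bounds: "0 < Phi x" "Phi x < 1"
proof -
  have "Phi (x - 1) \<ge> 0" unfolding Phi_cdf by (rule NR.cdf_nonneg)
  then show "0 < Phi x" using Phi_strict[of "x - 1" x] by simp
  have "Phi (x + 1) \<le> 1" unfolding Phi_cdf by (rule NR.cdf_bounded_prob)
  then show "Phi x < 1" using Phi_strict[of x "x + 1"] by simp
qed

lemma Phi_surj: assumes "0 < y" "y < 1" shows "\<exists>x. Phi x = y"
proof -
  have top: "(Phi \<longlongrightarrow> 1) at_top" unfolding Phi_cdf by (rule NR.cdf_lim_at_top_prob)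
  have bot: "(Phi \<longlongrightarrow> 0) at_bot" unfolding Phi_cdf by (rule NR.cdf_lim_at_bot)
  from order_tendstoD(1)[OF top assms(2)] obtain b where b: "\<And>x. x \<ge> b \<Longrightarrow> y < Phi x"
    by (auto simp: eventually_at_top_linorder)
  from order_tendstoD(2)[OF bot assms(1)] obtain a where a: "\<And>x. x \<le> a \<Longrightarrow> Phi x < y"
    by (auto simp: eventually_at_bot_linorder)
  define a' where "a' = min a b"
  have "Phi a' < y" "y < Phi b" "a' \<le> b" using a b unfolding a'_def by auto
  then show ?thesis using IVT[of Phi a' y b] Phi_cont by (auto intro: less_imp_le)
qed

lemma Phi_Phi_inv: assumes "0 < y" "y < 1" shows "Phi (Phi_inv y) = y"
proof -
  obtain x where x: "Phi x = y" using Phi_surj[OF assms] by blast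
  have "(THE x. Phi x = y) = x"
    by (rule the_equality) (use x Phi_inj in auto)
  then show ?thesis using assms x by (simp add: Phi_inv_def)
qed

lemma Phi_inv_Phi: "Phi_inv (Phi x) = x"
proof -
  have "Phi (Phi_inv (Phi x)) = Phi x" using Phi_Phi_inv Phi_bounds by blast
  then show ?thesis by (rule Phi_inj)
qed

lemma Phi_inv_le: assumes "0 < y" "y < 1" shows "Phi_inv y \<le> x \<longleftrightarrow> y \<le> Phi x"
  using Phi_le_iff[of "Phi_inv y" x] Phi_Phi_inv[OF assms] by simp

lemma Phi_inv_ge: assumes "0 < y" "y < 1" shows "x \<le> Phi_inv y \<longleftrightarrow> Phi x \<le> y"
  using Phi_le_iff[of x "Phi_inv y"] Phi_Phi_inv[OF assms] by simp

lemma Phi_meas[measurable]: "Phi \<in> borel_measurable borel"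
  by (rule borel_measurable_mono) (auto simp: mono_def Phi_mono)

lemma Phi_inv_set: "{y. Phi_inv y \<le> x} = {0<..Phi x} \<union> (if 0 \<le> x then - {0<..<1} else {})"
proof -
  have *: "Phi_inv y \<le> x \<longleftrightarrow> y \<in> {0<..Phi x} \<union> (if 0 \<le> x then - {0<..<1} else {})" for y
  proof (cases "0 < y \<and> y < 1")
    case True
    then have "Phi_inv y \<le> x \<longleftrightarrow> y \<le> Phi x" using Phi_inv_le by blast
    then show ?thesis using True by auto
  next
    case False
    then have "Phi_inv y = 0" unfolding Phi_inv_def by meson
    then show ?thesis using False Phi_bounds[of x] by auto
  qed
  show ?thesis
  proof (rule set_eqI)
    fix y show "y \<in> {y. Phi_inv y \<le> x} \<longleftrightarrow> y \<in> {0<..Phi x} \<union> (if 0 \<le> x then - {0<..<1} else {})"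
      unfolding mem_Collect_eq by (rule *)
  qed
qed

lemma Phi_inv_meas[measurable]: "Phi_inv \<in> borel_measurable borel"
  unfolding borel_measurable_iff_le
proof
  fix a
  have "{w \<in> space borel. Phi_inv w \<le> a} = {w. Phi_inv w \<le> a}" by simp
  also have "\<dots> = {0<..Phi a} \<union> (if 0 \<le> a then - {0<..<1} else {})" by (rule Phi_inv_set)
  also have "\<dots> \<in> sets borel"
  proof (cases "0 \<le> a")
    case True
    have "- {0<..<1::real} \<in> sets borel" by (intro borel_closed closed_Compl) auto
    then show ?thesis using True by auto
  qed simp
  finally show "{w \<in> space borel. Phi_inv w \<le> a} \<in> sets borel" .
qed


abbreviation Unif :: "real measure" where "Unif \<equiv> uniform_measure lborel {0..1::real}"

lemma Unif_prob: "prob_space Unif"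
  by (rule prob_space_uniform_measure) auto

lemma sets_Unif[measurable_cong]: "sets Unif = sets borel" by simp

lemma space_Unif[simp]: "space Unif = UNIV" by simp

lemma emeasure_Unif_Phi_inv: "emeasure Unif {y. Phi_inv y \<le> x} = ennreal (Phi x)"
proof -
  have "{y. Phi_inv y \<le> x} \<inter> {0..1} = {0<..Phi x} \<union> (if 0 \<le> x then {0,1} else {})"
    unfolding Phi_inv_set using Phi_bounds[of x] by auto
  moreover have "emeasure lborel ({0<..Phi x} \<union> {0,1}) = emeasure lborel {0<..Phi x}"
    by (intro emeasure_Un_null_set finite_imp_null_set_lborel) auto
  ultimately have "emeasure lborel ({y. Phi_inv y \<le> x} \<inter> {0..1}) = emeasure lborel {0<..Phi x}"
    by (cases "0 \<le> x") auto
  also have "\<dots> = ennreal (Phi x)" using Phi_bounds[of x] by simp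
  finally have *: "emeasure lborel ({y. Phi_inv y \<le> x} \<inter> {0..1}) = ennreal (Phi x)" .
  have "{y. Phi_inv y \<le> x} \<in> sets borel" by measurable
  then have "emeasure Unif {y. Phi_inv y \<le> x} = emeasure lborel ({y. Phi_inv y \<le> x} \<inter> {0..1}) / emeasure lborel {0..1::real}"
    by (subst emeasure_uniform_measure) (auto simp: Int_commute)
  then show ?thesis using * by (simp add: divide_ennreal_def)
qed

lemma distr_Unif_Phi_inv: "distr Unif borel Phi_inv = Nrm"
proof (rule cdf_unique)
  show "real_distribution (distr Unif borel Phi_inv)"
    unfolding real_distribution_def real_distribution_axioms_def
    using prob_space.prob_space_distr[OF Unif_prob, of Phi_inv borel] by simp
  show "real_distribution Nrm" by (rule Nrm_rd)
  show "cdf (distr Unif borel Phi_inv) = cdf Nrm"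
  proof
    fix x
    have "cdf (distr Unif borel Phi_inv) x = measure Unif (Phi_inv -` {..x})"
      unfolding cdf_def by (simp add: measure_distr)
    also have "Phi_inv -` {..x} = {y. Phi_inv y \<le> x}" by auto
    also have "measure Unif {y. Phi_inv y \<le> x} = Phi x"
      using emeasure_Unif_Phi_inv[of x] Phi_bounds[of x] by (simp add: measure_def)
    finally show "cdf (distr Unif borel Phi_inv) x = cdf Nrm x" by (simp add: Phi_cdf)
  qed
qed


lemma barrier_iff:
  fixes w a b B y :: real
  assumes "w > 0" "b > 0" "B > 0"
  shows "B \<le> w * exp (a + b * y) \<longleftrightarrow> (ln (B / w) - a) / b \<le> y"
proof -
  have "B \<le> w * exp (a + b * y) \<longleftrightarrow> ln B \<le> ln (w * exp (a + b * y))"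
    using assms by (subst ln_le_cancel_iff) auto
  also have "\<dots> \<longleftrightarrow> ln B \<le> ln w + a + b * y" using assms by (simp add: ln_mult add.assoc)
  also have "\<dots> \<longleftrightarrow> ln (B / w) - a \<le> b * y" using assms by (simp add: ln_div) linarith
  also have "\<dots> \<longleftrightarrow> (ln (B / w) - a) / b \<le> y" using assms by (simp add: pos_divide_le_eq mult.commute)
  finally show ?thesis .
qed

lemma nn_Unif: assumes [measurable]: "g \<in> borel_measurable borel"
  shows "(\<integral>\<^sup>+ v. g v \<partial>Unif) = (\<integral>\<^sup>+ v. g v * indicator {0..1} v \<partial>lborel)"
  by (subst nn_integral_uniform_measure) (auto simp: divide_ennreal_def)

lemma key:
  fixes f :: "real \<Rightarrow> ennreal" and w a b B :: real
  assumes f[measurable]: "f \<in> borel_measurable borel" and w: "w > 0" and b: "b > 0" and B: "B > 0"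
  defines "p \<equiv> Phi ((ln (B / w) - a) / b)"
  shows "(\<integral>\<^sup>+ y. (if B \<le> w * exp (a + b * y) then f (w * exp (a + b * y)) else 0) \<partial>Nrm)
       = (\<integral>\<^sup>+ v. ennreal (1 - p) * f (w * exp (a + b * Phi_inv ((1 - p) * v + p))) \<partial>Unif)"
proof -
  define c where "c = (ln (B / w) - a) / b"
  have p: "0 < p" "p < 1" unfolding p_def using Phi_bounds by auto
  define g where "g y = (if B \<le> w * exp (a + b * y) then f (w * exp (a + b * y)) else 0)" for y
  have g[measurable]: "g \<in> borel_measurable borel" unfolding g_def by measurable
  define F where "F v = f (w * exp (a + b * Phi_inv v))" for v
  have F[measurable]: "F \<in> borel_measurable borel" unfolding F_def by measurable
  have "(\<integral>\<^sup>+ y. g y \<partial>Nrm) = (\<integral>\<^sup>+ y. g y \<partial>distr Unif borel Phi_inv)"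
    by (simp add: distr_Unif_Phi_inv)
  also have "\<dots> = (\<integral>\<^sup>+ v. g (Phi_inv v) \<partial>Unif)"
    by (subst nn_integral_distr) auto
  also have "\<dots> = (\<integral>\<^sup>+ v. g (Phi_inv v) * indicator {0..1} v \<partial>lborel)"
    by (rule nn_Unif) measurable
  also have "\<dots> = (\<integral>\<^sup>+ v. F v * indicator {p..1} v \<partial>lborel)"
  proof (rule nn_integral_cong_AE)
    have "AE v in lborel. v \<noteq> 0" "AE v in lborel. v \<noteq> 1" by (rule AE_lborel_singleton)+
    then show "AE v in lborel. g (Phi_inv v) * indicator {0..1} v = F v * indicator {p..1} v"
    proof eventually_elim
      case (elim v)
      show ?case
      proof (cases "0 < v \<and> v < 1")
        case True
        have "B \<le> w * exp (a + b * Phi_inv v) \<longleftrightarrow> c \<le> Phi_inv v"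
          unfolding c_def by (rule barrier_iff[OF w b B])
        also have "\<dots> \<longleftrightarrow> p \<le> v" unfolding p_def c_def using True by (simp add: Phi_inv_ge)
        finally show ?thesis using True p unfolding g_def F_def by (auto simp: indicator_def)
      next
        case False
        then have "v \<notin> {0..1}" "v \<notin> {p..1}" using elim p by auto
        then show ?thesis by simp
      qed
    qed
  qed
  also have "\<dots> = ennreal (1 - p) * (\<integral>\<^sup>+ u. F (p + (1 - p) * u) * indicator {p..1} (p + (1 - p) * u) \<partial>lborel)"
    using p by (subst nn_integral_real_affine[where c = "1 - p" and t = p]) auto
  also have "\<dots> = ennreal (1 - p) * (\<integral>\<^sup>+ u. F ((1 - p) * u + p) * indicator {0..1} u \<partial>lborel)"
  proof -
    have "indicator {p..1} (p + (1 - p) * u) = (indicator {0..1} u :: ennreal)" for u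
    proof -
      have "p \<le> p + (1 - p) * u \<longleftrightarrow> 0 \<le> u" using mult_le_cancel_left_pos[of "1-p" 0 u] p by simp
      moreover have "p + (1 - p) * u \<le> 1 \<longleftrightarrow> u \<le> 1"
      proof -
        have "(1 - p) * u \<le> (1 - p) * 1 \<longleftrightarrow> u \<le> 1" using p by (intro mult_le_cancel_left_pos) simp
        then have "(1 - p) * u \<le> 1 - p \<longleftrightarrow> u \<le> 1" by simp
        then show ?thesis by linarith
      qed
      ultimately show ?thesis by (auto simp: indicator_def)
    qed
    then show ?thesis by (simp add: add.commute)
  qed
  also have "\<dots> = (\<integral>\<^sup>+ u. ennreal (1 - p) * F ((1 - p) * u + p) * indicator {0..1} u \<partial>lborel)"
    by (subst nn_integral_cmult[symmetric]) (auto simp: mult.assoc)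
  also have "\<dots> = (\<integral>\<^sup>+ u. ennreal (1 - p) * F ((1 - p) * u + p) \<partial>Unif)"
    by (rule nn_Unif[symmetric]) measurable
  finally show ?thesis unfolding g_def F_def .
qed


lemma sets_Nrm[measurable_cong]: "sets Nrm = sets borel" by simp

lemma PN: "product_sigma_finite (\<lambda>_::nat. Nrm)"
  by (rule product_sigma_finite.intro) (rule NR.sigma_finite_measure_axioms)

lemma PU: "product_sigma_finite (\<lambda>_::nat. Unif)"
  by (rule product_sigma_finite.intro) (rule prob_space_imp_sigma_finite[OF Unif_prob])

lemma comp_meas:
  assumes "\<And>i. sets (M i) = sets borel" "i \<in> I"
  shows "(\<lambda>z. z i) \<in> borel_measurable (PiM I M)"
proof -
  have eq: "measurable (PiM I M) (M i) = measurable (PiM I M) borel"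
    by (rule measurable_cong_sets[OF refl assms(1)])
  show ?thesis unfolding eq[symmetric] by (rule measurable_component_singleton) (rule assms(2))
qed

lemma meas2:
  fixes f g :: "'a \<Rightarrow> real"
  assumes "f \<in> borel_measurable N" "g \<in> borel_measurable N" "H \<in> borel_measurable (borel \<Otimes>\<^sub>M borel)"
  shows "(\<lambda>x. H (f x, g x)) \<in> borel_measurable N"
  by (rule measurable_compose[OF measurable_Pair[OF assms(1,2)] assms(3)])

lemma gbm_meas:
  assumes "\<And>i. sets (M i) = sets borel" "{0..<j} \<subseteq> I"
  shows "(\<lambda>z. gbm_path mu sg dt s z j) \<in> borel_measurable (PiM I M)"
  using assms(2)
proof (induction j)
  case 0 then show ?case by simp
next
  case (Suc j)
  have zj: "(\<lambda>z. z j) \<in> borel_measurable (PiM I M)"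
    using Suc.prems by (intro comp_meas assms(1)) auto
  have "{0..<j} \<subseteq> I" using Suc.prems by auto
  then have ih: "(\<lambda>z. gbm_path mu sg dt s z j) \<in> borel_measurable (PiM I M)"
    by (rule Suc.IH)
  have "(\<lambda>(a, b). a * exp ((mu - sg\<^sup>2 / 2) * dt + sg * sqrt dt * b)) \<in> borel_measurable (borel \<Otimes>\<^sub>M (borel :: real measure))"
    by measurable
  from meas2[OF ih zj this] show ?case by simp
qed

lemma ko_meas[measurable]: "(\<lambda>s. ko_prob mu sg dt B s) \<in> borel_measurable borel"
  unfolding ko_prob_def by measurable

lemma cond_meas:
  assumes "\<And>i. sets (M i) = sets borel" "{0..<j} \<subseteq> I"
  shows "(\<lambda>z. cond_path mu sg dt B s z j) \<in> borel_measurable (PiM I M)"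
  using assms(2)
proof (induction j)
  case 0 then show ?case by simp
next
  case (Suc j)
  have zj: "(\<lambda>z. z j) \<in> borel_measurable (PiM I M)"
    using Suc.prems by (intro comp_meas assms(1)) auto
  have "{0..<j} \<subseteq> I" using Suc.prems by auto
  then have ih: "(\<lambda>z. cond_path mu sg dt B s z j) \<in> borel_measurable (PiM I M)"
    by (rule Suc.IH)
  have "(\<lambda>(a, b). a * exp ((mu - sg\<^sup>2 / 2) * dt + sg * sqrt dt *
     Phi_inv ((1 - ko_prob mu sg dt B a) * b + ko_prob mu sg dt B a))) \<in> borel_measurable (borel \<Otimes>\<^sub>M (borel :: real measure))"
    by measurable
  from meas2[OF ih zj this] show ?case by (simp add: Let_def)
qed

lemma gbm_cong: "(\<And>i. i < j \<Longrightarrow> z i = z' i) \<Longrightarrow> gbm_path mu sg dt s z j = gbm_path mu sg dt s z' j"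
  by (induction j) auto

lemma cond_cong: "(\<And>i. i < j \<Longrightarrow> z i = z' i) \<Longrightarrow> cond_path mu sg dt B s z j = cond_path mu sg dt B s z' j"
  by (induction j) (auto simp: Let_def)

lemma cond_pos: "s > 0 \<Longrightarrow> cond_path mu sg dt B s z j > 0"
  by (induction j) (auto simp: Let_def)

lemma ko_lt1: "ko_prob mu sg dt B s < 1"
  unfolding ko_prob_def by (rule Phi_bounds)

definition Fn :: "real \<Rightarrow> real \<Rightarrow> real \<Rightarrow> real \<Rightarrow> nat \<Rightarrow> (real \<Rightarrow> ennreal) \<Rightarrow> real \<Rightarrow> ennreal" where
  "Fn mu sg dt B n f s = (\<integral>\<^sup>+ z. (if \<forall>j\<in>{1..n}. B \<le> gbm_path mu sg dt s z j then f (gbm_path mu sg dt s z n) else 0)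
      \<partial>PiM {0..<n} (\<lambda>_. Nrm))"

definition Gn :: "real \<Rightarrow> real \<Rightarrow> real \<Rightarrow> real \<Rightarrow> nat \<Rightarrow> (real \<Rightarrow> ennreal) \<Rightarrow> real \<Rightarrow> ennreal" where
  "Gn mu sg dt B n f s = (\<integral>\<^sup>+ u. ennreal (\<Prod>t<n. 1 - ko_prob mu sg dt B (cond_path mu sg dt B s u t))
      * f (cond_path mu sg dt B s u n) \<partial>PiM {0..<n} (\<lambda>_. Unif))"

definition hF :: "real \<Rightarrow> real \<Rightarrow> real \<Rightarrow> real \<Rightarrow> (real \<Rightarrow> ennreal) \<Rightarrow> real \<Rightarrow> ennreal" where
  "hF mu sg dt B f w = (\<integral>\<^sup>+ y. (if B \<le> w * exp ((mu - sg\<^sup>2 / 2) * dt + sg * sqrt dt * y)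
        then f (w * exp ((mu - sg\<^sup>2 / 2) * dt + sg * sqrt dt * y)) else 0) \<partial>Nrm)"

definition kG :: "real \<Rightarrow> real \<Rightarrow> real \<Rightarrow> real \<Rightarrow> (real \<Rightarrow> ennreal) \<Rightarrow> real \<Rightarrow> ennreal" where
  "kG mu sg dt B f w = (\<integral>\<^sup>+ v. ennreal (1 - ko_prob mu sg dt B w) *
        f (w * exp ((mu - sg\<^sup>2 / 2) * dt + sg * sqrt dt *
            Phi_inv ((1 - ko_prob mu sg dt B w) * v + ko_prob mu sg dt B w))) \<partial>Unif)"

lemma hF_meas[measurable]: assumes [measurable]: "f \<in> borel_measurable borel"
  shows "hF mu sg dt B f \<in> borel_measurable borel"
  unfolding hF_def by measurable

lemma hF_kG: assumes "f \<in> borel_measurable borel" "w > 0" "sg > 0" "dt > 0" "B > 0"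
  shows "hF mu sg dt B f w = kG mu sg dt B f w"
  unfolding hF_def kG_def ko_prob_def
  by (rule key) (use assms in auto)


lemma F_int_meas:
  assumes f[measurable]: "f \<in> borel_measurable borel" and M: "\<And>i. sets (M i) = sets borel"
    and I: "{0..<n} \<subseteq> I"
  shows "(\<lambda>z. if \<forall>j\<in>{1..n}. B \<le> gbm_path mu sg dt s z j then f (gbm_path mu sg dt s z n) else 0)
    \<in> borel_measurable (PiM I M)"
proof -
  have g: "(\<lambda>z. gbm_path mu sg dt s z j) \<in> borel_measurable (PiM I M)" if "j \<le> n" for j
    by (rule gbm_meas[OF M]) (use I that in auto)
  have p: "Measurable.pred (PiM I M) (\<lambda>z. \<forall>j\<in>{1..n}. B \<le> gbm_path mu sg dt s z j)"
  proof (rule pred_intros_finite(3))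
    fix j assume "j \<in> {1..n}"
    then have [measurable]: "(\<lambda>z. gbm_path mu sg dt s z j) \<in> borel_measurable (PiM I M)"
      using g by auto
    show "Measurable.pred (PiM I M) (\<lambda>z. B \<le> gbm_path mu sg dt s z j)" by measurable
  qed simp
  have fm: "(\<lambda>z. f (gbm_path mu sg dt s z n)) \<in> borel_measurable (PiM I M)"
    by (rule measurable_compose[OF g[of n] f]) simp
  show ?thesis by (rule measurable_If[OF fm _ p[unfolded pred_def]]) simp
qed

lemma G_int_meas:
  assumes f[measurable]: "f \<in> borel_measurable borel" and M: "\<And>i. sets (M i) = sets borel"
    and I: "{0..<n} \<subseteq> I"
  shows "(\<lambda>u. ennreal (\<Prod>t<n. 1 - ko_prob mu sg dt B (cond_path mu sg dt B s u t))
      * f (cond_path mu sg dt B s u n)) \<in> borel_measurable (PiM I M)"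
proof -
  have c: "(\<lambda>u. cond_path mu sg dt B s u t) \<in> borel_measurable (PiM I M)" if "t \<le> n" for t
    by (rule cond_meas[OF M]) (use I that in auto)
  have pr: "(\<lambda>u. \<Prod>t<n. 1 - ko_prob mu sg dt B (cond_path mu sg dt B s u t)) \<in> borel_measurable (PiM I M)"
  proof (rule borel_measurable_prod)
    fix t assume "t \<in> {..<n}"
    then have [measurable]: "(\<lambda>u. cond_path mu sg dt B s u t) \<in> borel_measurable (PiM I M)"
      using c by auto
    show "(\<lambda>u. 1 - ko_prob mu sg dt B (cond_path mu sg dt B s u t)) \<in> borel_measurable (PiM I M)"
      by measurable
  qed
  have fm: "(\<lambda>u. f (cond_path mu sg dt B s u n)) \<in> borel_measurable (PiM I M)"
    by (rule measurable_compose[OF c[of n] f]) simp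
  have [measurable]: "(\<lambda>u. \<Prod>t<n. 1 - ko_prob mu sg dt B (cond_path mu sg dt B s u t)) \<in> borel_measurable (PiM I M)"
    by (rule pr)
  have pe: "(\<lambda>u. ennreal (\<Prod>t<n. 1 - ko_prob mu sg dt B (cond_path mu sg dt B s u t))) \<in> borel_measurable (PiM I M)"
    by measurable
  show ?thesis by (rule borel_measurable_times_ennreal[OF pe fm])
qed


lemma ball_Suc: "(\<forall>j\<in>{1..Suc n}. P j) \<longleftrightarrow> (\<forall>j\<in>{1..n}. P j) \<and> P (Suc n)"
  by (subst atLeastAtMostSuc_conv) auto

lemma F_Suc:
  assumes f[measurable]: "f \<in> borel_measurable borel"
  shows "Fn mu sg dt B (Suc n) f s = Fn mu sg dt B n (hF mu sg dt B f) s"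
proof -
  let ?P = "\<lambda>z. if \<forall>j\<in>{1..Suc n}. B \<le> gbm_path mu sg dt s z j then f (gbm_path mu sg dt s z (Suc n)) else 0"
  have "Fn mu sg dt B (Suc n) f s = (\<integral>\<^sup>+ z. ?P z \<partial>PiM (insert n {0..<n}) (\<lambda>_. Nrm))"
    unfolding Fn_def atLeast0_lessThan_Suc ..
  also have "\<dots> = (\<integral>\<^sup>+ x. (\<integral>\<^sup>+ y. ?P (x(n := y)) \<partial>Nrm) \<partial>PiM {0..<n} (\<lambda>_. Nrm))"
  proof -
    have m: "?P \<in> borel_measurable (PiM (insert n {0..<n}) (\<lambda>_. Nrm))"
      by (rule F_int_meas[OF f]) auto
    show ?thesis by (rule product_sigma_finite.product_nn_integral_insert[OF PN _ _ m]) auto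
  qed
  also have "\<dots> = (\<integral>\<^sup>+ x. (if \<forall>j\<in>{1..n}. B \<le> gbm_path mu sg dt s x j
        then hF mu sg dt B f (gbm_path mu sg dt s x n) else 0) \<partial>PiM {0..<n} (\<lambda>_. Nrm))"
  proof (rule nn_integral_cong)
    fix x :: "nat \<Rightarrow> real"
    have eq: "gbm_path mu sg dt s (x(n := y)) j = gbm_path mu sg dt s x j" if "j \<le> n" for y j
      by (rule gbm_cong) (use that in auto)
    have eq2: "gbm_path mu sg dt s (x(n := y)) (Suc n) =
        gbm_path mu sg dt s x n * exp ((mu - sg\<^sup>2 / 2) * dt + sg * sqrt dt * y)" for y
      using eq[of n y] by simp
    have eq3: "(\<forall>j\<in>{1..n}. B \<le> gbm_path mu sg dt s (x(n := y)) j) \<longleftrightarrow> (\<forall>j\<in>{1..n}. B \<le> gbm_path mu sg dt s x j)" for y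
      using eq by auto
    show "(\<integral>\<^sup>+ y. ?P (x(n := y)) \<partial>Nrm) = (if \<forall>j\<in>{1..n}. B \<le> gbm_path mu sg dt s x j
        then hF mu sg dt B f (gbm_path mu sg dt s x n) else 0)"
    proof (cases "\<forall>j\<in>{1..n}. B \<le> gbm_path mu sg dt s x j")
      case True
      then show ?thesis unfolding hF_def ball_Suc eq2 eq3 by simp
    next
      case False
      have "?P (x(n := y)) = 0" for y unfolding ball_Suc eq3 using False by (intro if_not_P) blast
      then show ?thesis unfolding if_not_P[OF False] by simp
    qed
  qed
  also have "\<dots> = Fn mu sg dt B n (hF mu sg dt B f) s" unfolding Fn_def ..
  finally show ?thesis .
qed

lemma G_Suc:
  assumes f[measurable]: "f \<in> borel_measurable borel"
  shows "Gn mu sg dt B (Suc n) f s = Gn mu sg dt B n (kG mu sg dt B f) s"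
proof -
  let ?P = "\<lambda>u. ennreal (\<Prod>t<Suc n. 1 - ko_prob mu sg dt B (cond_path mu sg dt B s u t))
      * f (cond_path mu sg dt B s u (Suc n))"
  have "Gn mu sg dt B (Suc n) f s = (\<integral>\<^sup>+ z. ?P z \<partial>PiM (insert n {0..<n}) (\<lambda>_. Unif))"
    unfolding Gn_def atLeast0_lessThan_Suc ..
  also have "\<dots> = (\<integral>\<^sup>+ x. (\<integral>\<^sup>+ y. ?P (x(n := y)) \<partial>Unif) \<partial>PiM {0..<n} (\<lambda>_. Unif))"
  proof -
    have m: "?P \<in> borel_measurable (PiM (insert n {0..<n}) (\<lambda>_. Unif))"
      by (rule G_int_meas[OF f]) auto
    show ?thesis by (rule product_sigma_finite.product_nn_integral_insert[OF PU _ _ m]) auto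
  qed
  also have "\<dots> = (\<integral>\<^sup>+ x. ennreal (\<Prod>t<n. 1 - ko_prob mu sg dt B (cond_path mu sg dt B s x t))
      * kG mu sg dt B f (cond_path mu sg dt B s x n) \<partial>PiM {0..<n} (\<lambda>_. Unif))"
  proof (rule nn_integral_cong)
    fix x :: "nat \<Rightarrow> real"
    define w where "w = cond_path mu sg dt B s x n"
    define A where "A = (\<Prod>t<n. 1 - ko_prob mu sg dt B (cond_path mu sg dt B s x t))"
    have eq: "cond_path mu sg dt B s (x(n := y)) j = cond_path mu sg dt B s x j" if "j \<le> n" for y j
      by (rule cond_cong) (use that in auto)
    have A0: "A \<ge> 0" unfolding A_def by (intro prod_nonneg) (simp add: ko_lt1 less_imp_le)
    have a0: "1 - ko_prob mu sg dt B w \<ge> 0" by (simp add: ko_lt1 less_imp_le)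
    have pe: "(\<Prod>t<Suc n. 1 - ko_prob mu sg dt B (cond_path mu sg dt B s (x(n := y)) t))
        = A * (1 - ko_prob mu sg dt B w)" for y
      unfolding prod.lessThan_Suc A_def w_def using eq by simp
    have ce: "cond_path mu sg dt B s (x(n := y)) (Suc n) = w * exp ((mu - sg\<^sup>2 / 2) * dt + sg * sqrt dt *
            Phi_inv ((1 - ko_prob mu sg dt B w) * y + ko_prob mu sg dt B w))" for y
      using eq[of n y] unfolding w_def by (simp add: Let_def)
    have "(\<integral>\<^sup>+ y. ?P (x(n := y)) \<partial>Unif) = (\<integral>\<^sup>+ y. ennreal A * (ennreal (1 - ko_prob mu sg dt B w) *
       f (w * exp ((mu - sg\<^sup>2 / 2) * dt + sg * sqrt dt *
            Phi_inv ((1 - ko_prob mu sg dt B w) * y + ko_prob mu sg dt B w)))) \<partial>Unif)"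
      unfolding pe ce using A0 a0 by (simp add: ennreal_mult mult.assoc)
    also have "\<dots> = ennreal A * kG mu sg dt B f w"
      unfolding kG_def by (rule nn_integral_cmult) measurable
    finally show "(\<integral>\<^sup>+ y. ?P (x(n := y)) \<partial>Unif) = ennreal (\<Prod>t<n. 1 - ko_prob mu sg dt B (cond_path mu sg dt B s x t))
      * kG mu sg dt B f (cond_path mu sg dt B s x n)" unfolding A_def w_def .
  qed
  also have "\<dots> = Gn mu sg dt B n (kG mu sg dt B f) s" unfolding Gn_def ..
  finally show ?thesis .
qed

lemma FG:
  assumes "sg > 0" "dt > 0" "B > 0"
  shows "f \<in> borel_measurable borel \<Longrightarrow> s > 0 \<Longrightarrow> Fn mu sg dt B n f s = Gn mu sg dt B n f s"
proof (induction n arbitrary: f)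
  case 0
  then show ?case by (simp add: Fn_def Gn_def PiM_empty nn_integral_count_space_finite)
next
  case (Suc n)
  have "Fn mu sg dt B (Suc n) f s = Fn mu sg dt B n (hF mu sg dt B f) s" by (rule F_Suc[OF Suc.prems(1)])
  also have "\<dots> = Gn mu sg dt B n (hF mu sg dt B f) s"
    by (rule Suc.IH) (use Suc.prems in auto)
  also have "\<dots> = Gn mu sg dt B n (kG mu sg dt B f) s"
    unfolding Gn_def
    by (intro nn_integral_cong arg_cong2[where f = "(*)"] refl hF_kG Suc.prems cond_pos assms)
  also have "\<dots> = Gn mu sg dt B (Suc n) f s" by (rule G_Suc[OF Suc.prems(1), symmetric])
  finally show ?case .
qed


lemma call_meas[measurable]: "call_payoff K \<in> borel_measurable borel"
  unfolding call_payoff_def by measurable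

lemma call_nonneg: "call_payoff K x \<ge> 0"
  unfolding call_payoff_def by simp

lemma Fn_0: "Fn mu sg dt B 0 f s = f s"
  by (simp add: Fn_def PiM_empty nn_integral_count_space_finite)

lemma RHS_eq:
  "integral\<^sup>L (PiM {0..<T} (\<lambda>_. Unif))
     (\<lambda>u. (\<Prod>t<T. 1 - ko_prob mu sg dt B (cond_path mu sg dt B S0 u t))
          * call_payoff K (cond_path mu sg dt B S0 u T))
   = enn2real (Gn mu sg dt B T (\<lambda>x. ennreal (call_payoff K x)) S0)"
proof -
  have c: "(\<lambda>u. cond_path mu sg dt B S0 u t) \<in> borel_measurable (PiM {0..<T} (\<lambda>_. Unif))" if "t \<le> T" for t
    by (rule cond_meas) (use that in auto)
  have pr: "(\<lambda>u. \<Prod>t<T. 1 - ko_prob mu sg dt B (cond_path mu sg dt B S0 u t)) \<in> borel_measurable (PiM {0..<T} (\<lambda>_. Unif))"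
  proof (rule borel_measurable_prod)
    fix t assume "t \<in> {..<T}"
    then have [measurable]: "(\<lambda>u. cond_path mu sg dt B S0 u t) \<in> borel_measurable (PiM {0..<T} (\<lambda>_. Unif))"
      using c by auto
    show "(\<lambda>u. 1 - ko_prob mu sg dt B (cond_path mu sg dt B S0 u t)) \<in> borel_measurable (PiM {0..<T} (\<lambda>_. Unif))"
      by measurable
  qed
  have fm: "(\<lambda>u. call_payoff K (cond_path mu sg dt B S0 u T)) \<in> borel_measurable (PiM {0..<T} (\<lambda>_. Unif))"
    by (rule measurable_compose[OF c[of T] call_meas]) simp
  have m: "(\<lambda>u. (\<Prod>t<T. 1 - ko_prob mu sg dt B (cond_path mu sg dt B S0 u t))
          * call_payoff K (cond_path mu sg dt B S0 u T)) \<in> borel_measurable (PiM {0..<T} (\<lambda>_. Unif))"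
    by (rule borel_measurable_times[OF pr fm])
  have nn: "0 \<le> (\<Prod>t<T. 1 - ko_prob mu sg dt B (cond_path mu sg dt B S0 u t))" for u
    by (intro prod_nonneg) (simp add: ko_lt1 less_imp_le)
  show ?thesis
    unfolding integral_eq_nn_integral[OF m AE_I2[OF mult_nonneg_nonneg[OF nn call_nonneg]]] Gn_def
    using nn call_nonneg by (simp add: ennreal_mult)
qed

lemma barrier_eq:
  "ennreal (barrier_payoff T B K (gbm_path mu sg dt S0 z)) =
   (if \<forall>j\<in>{1..T}. B \<le> gbm_path mu sg dt S0 z j then ennreal (call_payoff K (gbm_path mu sg dt S0 z T)) else 0)"
  unfolding barrier_payoff_def by simp

lemma LHS_eq:
  fixes M :: "'a measure" and Z :: "nat \<Rightarrow> 'a \<Rightarrow> real"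
  assumes "prob_space M"
    and ind: "prob_space.indep_vars M (\<lambda>_. borel) Z {0..<T}"
    and dist: "\<And>j. j < T \<Longrightarrow> distributed M lborel (Z j) std_normal_density"
  shows "prob_space.expectation M (\<lambda>\<omega>. barrier_payoff T B K (gbm_path mu sg dt S0 (\<lambda>j. Z j \<omega>)))
       = enn2real (Fn mu sg dt B T (\<lambda>x. ennreal (call_payoff K x)) S0)"
proof (cases "T = 0")
  case True
  interpret prob_space M by fact
  show ?thesis using True
    by (simp add: Fn_0 barrier_payoff_def call_nonneg prob_space)
next
  case False
  interpret prob_space M by fact
  define X where "X \<omega> = (\<lambda>j\<in>{0..<T}. Z j \<omega>)" for \<omega>
  define \<Phi> where "\<Phi> z = barrier_payoff T B K (gbm_path mu sg dt S0 z)" for z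
  have rv: "random_variable borel (Z j)" if "j \<in> {0..<T}" for j
  proof -
    have "Z j \<in> measurable M lborel" by (rule distributed_measurable[OF dist]) (use that in auto)
    moreover have "measurable M lborel = measurable M borel" by (rule measurable_cong_sets) auto
    ultimately show ?thesis by simp
  qed
  have de: "distr M (PiM {0..<T} (\<lambda>_. borel)) X = PiM {0..<T} (\<lambda>j. distr M borel (Z j))"
    unfolding X_def using indep_vars_iff_distr_eq_PiM'[where I="{0..<T}" and M'="\<lambda>_. borel" and X=Z] False rv ind by simp
  have dj: "distr M borel (Z j) = Nrm" if "j \<in> {0..<T}" for j
  proof -
    have "distr M borel (Z j) = distr M lborel (Z j)" by (rule distr_cong) auto
    also have "\<dots> = Nrm" using dist[of j] that by (simp add: distributed_distr_eq_density)
    finally show ?thesis .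
  qed
  have dX: "distr M (PiM {0..<T} (\<lambda>_. borel)) X = PiM {0..<T} (\<lambda>_. Nrm)"
    unfolding de by (rule PiM_cong) (auto simp: dj)
  have Xm: "X \<in> measurable M (PiM {0..<T} (\<lambda>_. borel))"
    unfolding X_def by (rule measurable_restrict) (use rv in auto)
  have \<Phi>m: "\<Phi> \<in> borel_measurable (PiM {0..<T} (\<lambda>_. borel))"
    unfolding \<Phi>_def barrier_payoff_def by (rule F_int_meas) auto
  have \<Phi>m2: "\<Phi> \<in> borel_measurable (PiM {0..<T} (\<lambda>_. Nrm))"
    unfolding \<Phi>_def barrier_payoff_def by (rule F_int_meas) auto
  have eqp: "barrier_payoff T B K (gbm_path mu sg dt S0 (\<lambda>j. Z j \<omega>)) = \<Phi> (X \<omega>)" for \<omega>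
  proof -
    have "gbm_path mu sg dt S0 (\<lambda>j. Z j \<omega>) j = gbm_path mu sg dt S0 (X \<omega>) j" if "j \<le> T" for j
      by (rule gbm_cong) (use that in \<open>auto simp: X_def\<close>)
    then show ?thesis unfolding \<Phi>_def barrier_payoff_def by auto
  qed
  have "expectation (\<lambda>\<omega>. barrier_payoff T B K (gbm_path mu sg dt S0 (\<lambda>j. Z j \<omega>)))
      = expectation (\<lambda>\<omega>. \<Phi> (X \<omega>))" unfolding eqp ..
  also have "\<dots> = integral\<^sup>L (distr M (PiM {0..<T} (\<lambda>_. borel)) X) \<Phi>"
    by (rule integral_distr[OF Xm \<Phi>m, symmetric])
  also have "\<dots> = integral\<^sup>L (PiM {0..<T} (\<lambda>_. Nrm)) \<Phi>" unfolding dX ..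
  also have "\<dots> = enn2real (\<integral>\<^sup>+ z. ennreal (\<Phi> z) \<partial>PiM {0..<T} (\<lambda>_. Nrm))"
    by (rule integral_eq_nn_integral[OF \<Phi>m2]) (auto simp: \<Phi>_def barrier_payoff_def call_nonneg)
  also have "\<dots> = enn2real (Fn mu sg dt B T (\<lambda>x. ennreal (call_payoff K x)) S0)"
    unfolding Fn_def \<Phi>_def barrier_eq ..
  finally show ?thesis .
qed

theorem theorem2p8:
  fixes M :: "'a measure" and Z :: "nat \<Rightarrow> 'a \<Rightarrow> real"
    and T :: nat and dt r mu sg S0 B K :: real
  assumes "prob_space M"
    and "prob_space.indep_vars M (\<lambda>_. borel) Z {0..<T}"
    and "\<And>j. j < T \<Longrightarrow> distributed M lborel (Z j) std_normal_density"
    and "dt > 0" and "sg > 0" and "S0 > 0" and "B > 0"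
  shows "exp (- r * real T * dt) *
           prob_space.expectation M
             (\<lambda>\<omega>. barrier_payoff T B K (gbm_path mu sg dt S0 (\<lambda>j. Z j \<omega>)))
       = exp (- r * real T * dt) *
           integral\<^sup>L (PiM {0..<T} (\<lambda>_. uniform_measure lborel {0..1::real}))
             (\<lambda>u. (\<Prod>t<T. 1 - ko_prob mu sg dt B (cond_path mu sg dt B S0 u t))
                  * call_payoff K (cond_path mu sg dt B S0 u T))"
proof -
  have "Fn mu sg dt B T (\<lambda>x. ennreal (call_payoff K x)) S0 = Gn mu sg dt B T (\<lambda>x. ennreal (call_payoff K x)) S0"
    by (rule FG) (use assms in auto)
  moreover have "prob_space.expectation M (\<lambda>\<omega>. barrier_payoff T B K (gbm_path mu sg dt S0 (\<lambda>j. Z j \<omega>)))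
       = enn2real (Fn mu sg dt B T (\<lambda>x. ennreal (call_payoff K x)) S0)"
    by (rule LHS_eq[OF assms(1-3)])
  ultimately show ?thesis
    unfolding RHS_eq by simp
qed

end
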